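(* Let $m,n$ be positive integers with $m>n$ and $m\ge 3$, and let $q$ be an odd prime. Let $X,y_1,y_2$ be positive integers with $X>1$, $\gcd(X,q)=1$, $y_1>y_2$ and $X^m-X^n=q^{y_1}-q^{y_2}$. Put $E=e_q(X)$, $N=(m-n)/E$ (an integer) and $e=\nu_q(N)$, and assume $N$ is odd. With \[ A_E(t)=\begin{cases} t-1 & E=1,\\ t^{E-1}+\cdots+t+1 & E>1,\end{cases}\quad B_{n,E}(t)=\begin{cases} t^n & E=1,\\ t^n(t-1) & E>1,\end{cases}\quad I_{E,N}(t)=\sum_{j=0}^{N-1}t^{Ej}, \] one has $y_2>e$, $I_{E,N}(X)\equiv 0\pmod{q^e}$, and there is a positive integer $K$ with $\gcd(K,q)=1$ such that \[ A_E(X)=K\,q^{y_2-e},\qquad B_{n,E}(X)\,I_{E,N}(X)\,K=q^e(q^{y_1-y_2}-1). \] Moreover: (i) if $E=1$, then $y_1>2(y_2-e)$, and $y_1>m(y_2-e)$ if $K>1$; (ii) if $E>1$, then $y_1\ge \frac{m}{E-1}(y_2-e)$ if $K>1$, and $y_1\ge 2(y_2-e)$ if $\dfrac{(y_2-e)(m-2E+2)+E-1}{m+\delta(E-1)}\ge\dfrac{\log 2}{\log q}$, where $\delta=1$ if $X^m>q^{y_1}$ and $\delta=0$ if $X^m<q^{y_1}$.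
   Context: For a positive integer $M$ and an integer $A$ coprime to $M$, $e_M(A)$ denotes the least positive integer $e$ such that $A^e\equiv \pm1\pmod M$. For a prime $p$, $\nu_p$ denotes the $p$-adic valuation. *)

theory Defs
  imports Complex_Main "HOL-Number_Theory.Number_Theory"
begin

definition pm_ord :: "int \<Rightarrow> int \<Rightarrow> nat" where
  "pm_ord M A = (LEAST e::nat. e > 0 \<and> ([A ^ e = 1] (mod M) \<or> [A ^ e = -1] (mod M)))"

definition A_poly :: "nat \<Rightarrow> int \<Rightarrow> int" where
  "A_poly E t = (if E = 1 then t - 1 else (\<Sum>j<E. t ^ j))"

definition B_poly :: "nat \<Rightarrow> nat \<Rightarrow> int \<Rightarrow> int" where
  "B_poly n E t = (if E = 1 then t ^ n else t ^ n * (t - 1))"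

definition I_poly :: "nat \<Rightarrow> nat \<Rightarrow> int \<Rightarrow> int" where
  "I_poly E N t = (\<Sum>j<N. t ^ (E * j))"

end

theory Submission
  imports Defs
begin

lemma sum_add_split: "(\<Sum>j<c+a. f j) = (\<Sum>j<c. f j) + (\<Sum>j<a. f (c+j))" for f :: "nat \<Rightarrow> nat"
  by (induction a) (simp_all add: add_ac)

lemma geom_split: "(\<Sum>j<a*b. Y^j) = (\<Sum>i<a. Y^i) * (\<Sum>k<b. (Y^a)^k)" for Y :: nat
proof (induction b)
  case 0 then show ?case by simp
next
  case (Suc b)
  have "(\<Sum>j<a*Suc b. Y^j) = (\<Sum>j<a*b + a. Y^j)" by (simp add: add.commute)
  also have "\<dots> = (\<Sum>j<a*b. Y^j) + (\<Sum>j<a. Y^(a*b+j))" by (rule sum_add_split)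
  also have "(\<Sum>j<a. Y^(a*b+j)) = (Y^a)^b * (\<Sum>j<a. Y^j)"
    by (simp add: power_add power_mult sum_distrib_left)
  finally have "(\<Sum>j<a*Suc b. Y^j) = (\<Sum>i<a. Y^i) * (\<Sum>k<b. (Y^a)^k) + (Y^a)^b * (\<Sum>j<a. Y^j)"
    using Suc by simp
  moreover have "(\<Sum>k<Suc b. (Y^a)^k) = (\<Sum>k<b. (Y^a)^k) + (Y^a)^b" by simp
  ultimately show ?case by (simp only: distrib_left) (simp add: mult.commute)
qed

lemma geom_nat: "(Y - 1) * (\<Sum>j<N. Y^j) = Y^N - 1" if "Y \<ge> 1" for Y :: nat
proof -
  have "int (Y^N) - 1 = (int Y - 1) * (\<Sum>j<N. int Y ^ j)"
    using power_diff_1_eq[of "int Y" N] by simp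
  moreover have "Y^N \<ge> 1" using that by simp
  ultimately have "int (Y^N - 1) = int ((Y - 1) * (\<Sum>j<N. Y^j))"
    using that by (simp add: of_nat_diff)
  then show ?thesis by (simp only: of_nat_eq_iff)
qed

lemma pow_cong_lin: "[Y^j = 1 + j*t*p] (mod p^2)" if "Y = 1 + t*p" for Y t p :: nat
proof (induction j)
  case 0 then show ?case by simp
next
  case (Suc j)
  have "[Y^j * Y = (1 + j*t*p) * (1 + t*p)] (mod p^2)"
    using Suc that cong_mult cong_refl by blast
  then have "[Y^Suc j = (1 + j*t*p) * (1 + t*p)] (mod p^2)"
    by (simp add: mult.commute)
  moreover have "(1 + j*t*p) * (1 + t*p) = (1 + Suc j*t*p) + (j*t*t) * p^2"
    by (simp add: algebra_simps power2_eq_square)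
  moreover have "[(1 + Suc j*t*p) + (j*t*t) * p^2 = 1 + Suc j*t*p] (mod p^2)"
    by (simp add: cong_def)
  ultimately show ?case using cong_trans[of "Y^Suc j" "(1 + j*t*p) * (1 + t*p)" "p^2" "1 + Suc j*t*p"] by simp
qed

lemma double_sum_lt: "2 * (\<Sum>j<p. j) + p = p * p" for p :: nat
proof (induction p)
  case 0 then show ?case by simp
next
  case (Suc p)
  have "2 * (\<Sum>j<Suc p. j) + Suc p = (2 * (\<Sum>j<p. j) + p) + 2 * p + 1" by simp
  also have "\<dots> = Suc p * Suc p" using Suc by simp
  finally show ?case .
qed

lemma sum_id_odd: "(\<Sum>j<p. j) = p * r" if "p = 2*r+1" for p :: nat
proof -
  have "2 * (\<Sum>j<p. j) + p = p * p" by (rule double_sum_lt)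
  also have "p * p = 2 * (p * r) + p" using that by (simp add: algebra_simps)
  finally show ?thesis by simp
qed

lemma sum_pow_pos: "N > 0 \<Longrightarrow> Y \<ge> 1 \<Longrightarrow> (\<Sum>j<N. Y^j) > (0::nat)"
  by (rule sum_pos2[of _ 0]) auto

lemma sum_p_mult:
  fixes p Y :: nat
  assumes p: "prime p" "odd p" and Y: "Y \<ge> 1" "[Y = 1] (mod p)"
  shows "multiplicity p (\<Sum>j<p. Y^j) = 1"
proof -
  obtain t where t: "Y - 1 = p * t" using cong_to_1_nat[OF Y(2)] by (auto elim: dvdE)
  have Yt: "Y = 1 + t * p" using t Y(1) by (simp add: algebra_simps)
  obtain r where r: "p = 2*r+1" using p(2) oddE by blast
  have "[(\<Sum>j<p. Y^j) = (\<Sum>j<p. 1 + j*t*p)] (mod p^2)"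
    by (rule cong_sum) (rule pow_cong_lin[OF Yt])
  moreover have "(\<Sum>j<p. 1 + j*t*p) = (\<Sum>j<p. (1::nat)) + (\<Sum>j<p. j*t*p)"
    by (rule sum.distrib)
  moreover have "(\<Sum>j<p. j*t*p) = (\<Sum>j<p. j*(t*p))" by (simp add: mult.assoc)
  moreover have "(\<Sum>j<p. j*(t*p)) = (\<Sum>j<p. j)*(t*p)" by (simp add: sum_distrib_right)
  moreover have "p + (\<Sum>j<p. j)*(t*p) = p + (t*r) * p^2" using sum_id_odd[OF r] by (simp add: power2_eq_square algebra_simps)
  moreover have "[p + (t*r) * p^2 = p] (mod p^2)" by (simp add: cong_def)
  ultimately have "(\<Sum>j<p. 1 + j*t*p) = p + (t*r) * p^2" by simp
  with \<open>[(\<Sum>j<p. Y^j) = (\<Sum>j<p. 1 + j*t*p)] (mod p^2)\<close> \<open>[p + (t*r) * p^2 = p] (mod p^2)\<close>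
  have c: "[(\<Sum>j<p. Y^j) = p] (mod p^2)" using cong_trans by metis
  have p2: "p \<ge> 2" using p(1) prime_ge_2_nat by blast
  have "p dvd p^2" by simp
  then have d1: "p ^ 1 dvd (\<Sum>j<p. Y^j)"
    using c by (metis cong_dvd_modulus_nat dvd_refl power_one_right cong_dvd_iff)
  have d2: "\<not> p ^ Suc 1 dvd (\<Sum>j<p. Y^j)"
  proof
    assume "p ^ Suc 1 dvd (\<Sum>j<p. Y^j)"
    moreover have "p ^ Suc 1 = p^2" by (simp add: power2_eq_square)
    ultimately have "p^2 dvd (\<Sum>j<p. Y^j)" by simp
    then have "p^2 dvd p" using cong_dvd_iff[OF c] by simp
    then have "p^2 \<le> p" using p2 by (intro dvd_imp_le) auto
    moreover have "2*p \<le> p*p" using p2 by simp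
    ultimately show False using p2 by (simp add: power2_eq_square)
  qed
  show ?thesis by (rule multiplicity_eqI[OF d1 d2])
qed

lemma geom_mult:
  fixes p :: nat
  assumes p: "prime p" "odd p"
  shows "Y \<ge> 1 \<Longrightarrow> [Y = 1] (mod p) \<Longrightarrow> N > 0 \<Longrightarrow>
         multiplicity p (\<Sum>j<N. Y^j) = multiplicity p N"
proof (induction N arbitrary: Y rule: less_induct)
  case (less N)
  show ?case
  proof (cases "p dvd N")
    case False
    have "[(\<Sum>j<N. Y^j) = (\<Sum>j<N. 1)] (mod p)"
      by (rule cong_sum) (use cong_pow[OF less.prems(2)] in simp)
    then have c: "[(\<Sum>j<N. Y^j) = N] (mod p)" by simp
    then have "\<not> p dvd (\<Sum>j<N. Y^j)" using False cong_dvd_iff by blast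
    then show ?thesis using False by (simp add: not_dvd_imp_multiplicity_0)
  next
    case True
    then obtain N' where N': "N = p * N'" by (auto elim: dvdE)
    have p2: "p \<ge> 2" using p(1) prime_ge_2_nat by blast
    have N'pos: "N' > 0" using N' less.prems(3) by (cases N') auto
    have N'lt: "N' < N" using N' N'pos p2 by simp
    have Yp1: "Y^p \<ge> 1" using less.prems(1) by simp
    have Ypc: "[Y^p = 1] (mod p)" using cong_pow[OF less.prems(2), of p] by simp
    have IH: "multiplicity p (\<Sum>j<N'. (Y^p)^j) = multiplicity p N'"
      by (rule less.IH[OF N'lt Yp1 Ypc N'pos])
    have "(\<Sum>j<N. Y^j) = (\<Sum>i<p. Y^i) * (\<Sum>k<N'. (Y^p)^k)"
      using N' geom_split by simp
    moreover have pos1: "(\<Sum>i<p. Y^i) > 0"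
    proof -
      have "p > 0" using p2 by simp
      from sum_pow_pos[OF this less.prems(1)] show ?thesis .
    qed
    moreover have pos2: "(\<Sum>k<N'. (Y^p)^k) > 0" using sum_pow_pos[OF N'pos Yp1] .
    ultimately have "multiplicity p (\<Sum>j<N. Y^j) = multiplicity p ((\<Sum>i<p. Y^i) * (\<Sum>k<N'. (Y^p)^k))"
      by simp
    also have "\<dots> = multiplicity p (\<Sum>i<p. Y^i) + multiplicity p (\<Sum>k<N'. (Y^p)^k)"
      by (rule prime_elem_multiplicity_mult_distrib[OF prime_imp_prime_elem[OF p(1)]]) (use pos1 pos2 in linarith)+
    finally have "multiplicity p (\<Sum>j<N. Y^j) = multiplicity p (\<Sum>i<p. Y^i) + multiplicity p (\<Sum>k<N'. (Y^p)^k)" .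
    then have "multiplicity p (\<Sum>j<N. Y^j) = 1 + multiplicity p N'"
      using sum_p_mult[OF p less.prems(1,2)] IH by simp
    moreover have "multiplicity p N = Suc (multiplicity p N')"
      unfolding N' using multiplicity_times_same[of N' p] N'pos p2 by simp
    ultimately show ?thesis by simp
  qed
qed

lemma ineqK:
  fixes X K Q A d E M y1 :: nat
  assumes X: "X \<ge> 2" and K: "K \<ge> 2" and E: "E \<ge> 2" and Q: "Q \<ge> 2"
    and hA: "(X-1)*A < X^E" and AK: "A = K*Q^d" and hy: "X^M*(X-1)*K*Q^d < Q^y1"
  shows "(M+E)*d < (E-1)*y1"
proof -
  obtain F where F: "E = Suc F" "F \<ge> 1" using E by (cases E) auto
  define T where "T = X^M*(X-1)*K"
  define C where "C = ((X-1)*K)^(M+1)"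
  have Cpos: "C > 0" using X K by (simp add: C_def)
  have "(X-1)*2 \<le> (X-1)*K" by (rule mult_le_mono2[OF K])
  moreover have "X \<le> (X-1)*2" using X by simp
  ultimately have XK: "X \<le> (X-1)*K" by linarith
  have e1: "((X-1)*A)^(M+1) = C * Q^(d*(M+1))"
    unfolding C_def AK by (simp only: power_mult_distrib power_mult mult_ac)
  have ex1: "E*(M+1) = M*F + (F+1+M)" using F by (simp add: algebra_simps)
  have e2: "(X^E)^(M+1) = X^(M*F) * X^(F+1+M)"
  proof -
    have "(X^E)^(M+1) = X^(E*(M+1))" by (rule power_mult[symmetric])
    also have "\<dots> = X^(M*F + (F+1+M))" by (simp only: ex1)
    also have "\<dots> = X^(M*F) * X^(F+1+M)" by (rule power_add)
    finally show ?thesis .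
  qed
  have e3: "X^(M*F) * ((X-1)*K)^(F+1+M) = T^F * C"
  proof -
    have a: "X^(M*F) = (X^M)^F" by (rule power_mult)
    have "F+1+M = F + (M+1)" by simp
    then have b: "((X-1)*K)^(F+1+M) = ((X-1)*K)^F * ((X-1)*K)^(M+1)" by (simp only: power_add)
    have "X^(M*F) * ((X-1)*K)^(F+1+M) = (X^M)^F * ((X-1)*K)^F * ((X-1)*K)^(M+1)"
      unfolding a b by (rule mult.assoc[symmetric])
    also have "\<dots> = T^F * C" by (simp only: T_def C_def power_mult_distrib mult_ac)
    finally show ?thesis .
  qed
  have "C * Q^(d*(M+1)) < (X^E)^(M+1)"
    unfolding e1[symmetric] by (rule power_strict_mono[OF hA]) simp_all
  also have "\<dots> \<le> X^(M*F) * ((X-1)*K)^(F+1+M)"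
    unfolding e2 by (intro mult_le_mono2 power_mono XK) simp
  finally have "C * Q^(d*(M+1)) < C * T^F" unfolding e3 by (simp add: mult.commute)
  then have h2: "Q^(d*(M+1)) < T^F" by simp
  have ex2: "(M+E)*d = d*(M+1) + d*F" using F by (simp add: algebra_simps)
  have "Q^((M+E)*d) = Q^(d*(M+1) + d*F)" by (simp only: ex2)
  also have "\<dots> = Q^(d*(M+1)) * Q^(d*F)" by (rule power_add)
  also have "\<dots> \<le> T^F * Q^(d*F)"
    using h2 by simp
  also have "\<dots> = (T*Q^d)^F" by (simp only: power_mult_distrib power_mult)
  also have "\<dots> < (Q^y1)^F"
    by (rule power_strict_mono) (use hy F in \<open>simp_all add: T_def\<close>)
  also have "\<dots> = Q^((E-1)*y1)"
  proof -
    have eqF: "(E-1)*y1 = y1*F" using F by simp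
    show ?thesis unfolding eqF by (rule power_mult[symmetric])
  qed
  finally have lt: "Q^((M+E)*d) < Q^((E-1)*y1)" .
  show ?thesis by (rule power_less_imp_less_exp[OF _ lt]) (use Q in simp)
qed

lemma E_props:
  fixes X q D E :: nat
  assumes q: "prime q" "odd q" and qX: "\<not> q dvd X" and XD: "[X^D = 1] (mod q)"
    and E: "E = pm_ord (int q) (int X)" and oddN: "odd (D div E)"
  shows "E > 0" "D = E * (D div E)" "[X^E = 1] (mod q)" "\<And>r. 0 < r \<Longrightarrow> r < E \<Longrightarrow> \<not> [X^r = 1] (mod q)"
proof -
  define P where "P = (\<lambda>e::nat. e > 0 \<and> ([int X ^ e = 1] (mod int q) \<or> [int X ^ e = -1] (mod int q)))"
  have Edef: "E = (LEAST e. P e)" unfolding E pm_ord_def P_def ..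
  have q2: "q \<ge> 2" using q(1) prime_ge_2_nat by blast
  have "[X^(q-1) = 1] (mod q)" by (rule fermat_theorem[OF q(1) qX])
  then have "[int X^(q-1) = 1] (mod int q)" using cong_int_iff[of "X^(q-1)" 1 q] by simp
  then have "P (q-1)" using q2 unfolding P_def by simp
  then have PE: "P E" unfolding Edef by (rule LeastI)
  have minE: "\<not> P r" if "r < E" for r using not_less_Least[of r P] that Edef by simp
  show Epos: "E > 0" using PE P_def by simp
  obtain c :: int where c: "c = 1 \<or> c = -1" "[int X ^ E = c] (mod int q)" using PE P_def by auto
  have XDi: "[int X ^ D = 1] (mod int q)" using XD cong_int_iff[of "X^D" 1 q] by simp
  define a where "a = D div E"
  define r where "r = D mod E"
  have Dar: "D = E * a + r" unfolding a_def r_def by simp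
  have ca: "c^a = 1 \<or> c^a = -1" using c(1) by (cases "even a") auto
  have ca2: "c^a * c^a = 1" using ca by auto
  have "[int X ^ D = (int X ^ E)^a * int X ^ r] (mod int q)"
    by (simp add: Dar power_add power_mult)
  moreover have "[(int X ^ E)^a * int X ^ r = c^a * int X ^ r] (mod int q)"
    by (intro cong_mult cong_pow c(2) cong_refl)
  ultimately have "[c^a * int X ^ r = 1] (mod int q)" using XDi by (meson cong_sym cong_trans)
  then have "[c^a * (c^a * int X ^ r) = c^a * 1] (mod int q)" by (intro cong_mult cong_refl)
  then have Xr: "[int X ^ r = c^a] (mod int q)" using ca2 by (simp add: mult.assoc[symmetric])
  have r0: "r = 0"
  proof (rule ccontr)
    assume "r \<noteq> 0"
    then have "P r" using Xr ca unfolding P_def by auto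
    moreover have "r < E" unfolding r_def using Epos by simp
    ultimately show False using minE by blast
  qed
  show DE: "D = E * (D div E)" using Dar r0 a_def by simp
  have "c^a = c" using c(1) oddN a_def by auto
  then have "[int X ^ D = c] (mod int q)" using Xr r0 Dar
    by (metis add.right_neutral cong_trans c(2) cong_pow power_mult cong_refl)
  then have "[c = 1] (mod int q)" using XDi by (meson cong_sym cong_trans)
  have c1: "c = 1"
  proof (rule ccontr)
    assume "c \<noteq> 1"
    then have "c = -1" using c(1) by simp
    then have "[-1 = 1] (mod int q)" using \<open>[c = 1] (mod int q)\<close> by simp
    then have "int q dvd 2" by (simp add: cong_iff_dvd_diff)
    then have "q dvd 2" by presburger
    then have "q \<le> 2" by (simp add: dvd_imp_le)
    then show False using q2 q(2) by simp
  qed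
  show "[X^E = 1] (mod q)" using c(2) c1 cong_int_iff[of "X^E" 1 q] by simp
  show "\<not> [X^r = 1] (mod q)" if "0 < r" "r < E" for r
  proof
    assume "[X^r = 1] (mod q)"
    then have "[int X ^ r = 1] (mod int q)" using cong_int_iff[of "X^r" 1 q] by simp
    then have "P r" using that unfolding P_def by simp
    then show False using minE that by blast
  qed
qed

theorem mainTheorem7:
  fixes m n q X y1 y2 :: nat
  assumes "n > 0" "m > n" "m \<ge> 3"
    and "prime q" "odd q"
    and "X > 1" "coprime X q"
    and "y2 > 0" "y1 > y2"
    and "int X ^ m - int X ^ n = int q ^ y1 - int q ^ y2"
  defines "E \<equiv> pm_ord (int q) (int X)"
  defines "N \<equiv> (m - n) div E"
  defines "e \<equiv> multiplicity q N"
  defines "\<delta> \<equiv> (if X ^ m > q ^ y1 then 1 else 0 :: nat)"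
  assumes "odd N"
  shows "y2 > e \<and> [I_poly E N (int X) = 0] (mod (int q ^ e)) \<and>
    (\<exists>K::int. K > 0 \<and> coprime K (int q) \<and>
       A_poly E (int X) = K * int q ^ (y2 - e) \<and>
       B_poly n E (int X) * I_poly E N (int X) * K = int q ^ e * (int q ^ (y1 - y2) - 1) \<and>
       (E = 1 \<longrightarrow> y1 > 2 * (y2 - e) \<and> (K > 1 \<longrightarrow> y1 > m * (y2 - e))) \<and>
       (E > 1 \<longrightarrow>
          (K > 1 \<longrightarrow> real y1 \<ge> real m / (real E - 1) * (real y2 - real e)) \<and>
          (((real y2 - real e) * (real m - 2 * real E + 2) + real E - 1) / (real m + real \<delta> * (real E - 1))
             \<ge> ln 2 / ln (real q) \<longrightarrow> y1 \<ge> 2 * (y2 - e))))"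
proof -
  note n0 = assms(1) and mn = assms(2) and m3 = assms(3) and q = assms(4,5)
    and X1 = assms(6) and cop = assms(7) and y20 = assms(8) and y12 = assms(9)
    and eqi = assms(10)
  note oddN = \<open>odd N\<close>
  have q2: "q \<ge> 2" using q(1) prime_ge_2_nat by blast
  have X2: "X \<ge> 2" using X1 by simp
  have qX: "\<not> q dvd X"
  proof
    assume "q dvd X"
    then have "q = 1" using coprime_common_divisor_nat[OF cop _ dvd_refl] by blast
    then show False using q2 by simp
  qed
  have qunit: "\<not> is_unit q" using q2 by simp
  define D where "D = m - n"
  define s where "s = y1 - y2"
  have D0: "D > 0" using mn D_def by simp
  have s0: "s > 0" using y12 s_def by simp
  have XmD: "X^m = X^n * X^D" unfolding D_def using mn by (simp add: power_add[symmetric])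
  have qy1: "q^y1 = q^y2 * q^s" unfolding s_def using y12 by (simp add: power_add[symmetric])
  have eqn: "X^m + q^y2 = q^y1 + X^n"
  proof -
    have "int (X^m + q^y2) = int (q^y1 + X^n)" using eqi by simp
    then show ?thesis by (simp only: of_nat_eq_iff)
  qed
  have XD1: "X^D \<ge> 1" using X2 by simp
  have qs1: "q^s \<ge> 1" using q2 by simp
  have eq2: "X^n * (X^D - 1) = q^y2 * (q^s - 1)"
    using eqn XmD qy1 XD1 qs1 by (simp add: diff_mult_distrib2)
  have XD1nz: "X^D - 1 \<noteq> 0"
  proof -
    have "X \<le> X^D" using D0 X2 by (simp add: self_le_power)
    then show ?thesis using X2 by simp
  qed
  have qs1nz: "q^s - 1 \<noteq> 0"
  proof -
    have "q \<le> q^s" using s0 q2 by (simp add: self_le_power)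
    then show ?thesis using q2 by simp
  qed
  have vXn: "multiplicity q (X^n) = 0"
    using qX prime_dvd_power[OF q(1)] by (intro not_dvd_imp_multiplicity_0) blast
  have vqs: "multiplicity q (q^s - 1) = 0"
  proof (intro not_dvd_imp_multiplicity_0)
    show "\<not> q dvd q^s - 1"
    proof
      assume h: "q dvd q^s - 1"
      have "q dvd q^s" using s0 by (simp add: dvd_power)
      then have "q dvd q^s - (q^s - 1)" using h by (rule dvd_diff_nat)
      then have "q dvd 1" using qs1 by simp
      then show False using q2 by simp
    qed
  qed
  have vqy2: "multiplicity q (q^y2) = y2" using q2 qunit by (intro multiplicity_same_power) simp_all
  have vXD: "multiplicity q (X^D - 1) = y2"
  proof -
    have "multiplicity q (X^n * (X^D - 1)) = multiplicity q (X^n) + multiplicity q (X^D - 1)"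
      by (rule prime_elem_multiplicity_mult_distrib) (use q(1) XD1nz X2 in simp_all)
    moreover have "multiplicity q (q^y2 * (q^s - 1)) = multiplicity q (q^y2) + multiplicity q (q^s - 1)"
      by (rule prime_elem_multiplicity_mult_distrib) (use q(1) qs1nz q2 in simp_all)
    ultimately show ?thesis using eq2 vXn vqs vqy2 by simp
  qed
  have XDc: "[X^D = 1] (mod q)"
  proof -
    have "q^1 dvd X^D - 1" using vXD y20 by (intro multiplicity_dvd') simp
    then show ?thesis using XD1 by (simp add: cong_altdef_nat)
  qed
  have ND: "N = D div E" unfolding N_def D_def ..
  have oddN': "odd (D div E)" using oddN ND by simp
  note EP = E_props[OF q qX XDc E_def[THEN meta_eq_to_obj_eq] oddN']
  have E0: "E > 0" and DEN: "D = E * N" and XE1: "[X^E = 1] (mod q)"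
    using EP(1,2,3) ND by simp_all
  have minE: "\<And>r. 0 < r \<Longrightarrow> r < E \<Longrightarrow> \<not> [X^r = 1] (mod q)" by (rule EP(4))
  have N0: "N > 0" using oddN by (cases N) auto
  define Y where "Y = X^E"
  define I where "I = (\<Sum>j<N. Y^j)"
  have Y2: "Y \<ge> 2"
  proof -
    have "X \<le> X^E" using E0 X2 by (simp add: self_le_power)
    then show ?thesis using X2 Y_def by simp
  qed
  have Ipos: "I > 0" unfolding I_def using sum_pow_pos[OF N0, of Y] Y2 by simp
  have YN: "Y^N = X^D" unfolding Y_def DEN by (simp add: power_mult)
  have YI: "(Y - 1) * I = X^D - 1" unfolding I_def using geom_nat[of Y N] Y2 YN by simp
  have vI: "multiplicity q I = e"
    unfolding I_def e_def using geom_mult[OF q, of Y N] Y2 XE1 N0 Y_def by simp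
  have Y1nz: "Y - 1 \<noteq> 0" using Y2 by simp
  have vY: "multiplicity q (Y - 1) + e = y2"
  proof -
    have "multiplicity q ((Y - 1) * I) = multiplicity q (Y - 1) + multiplicity q I"
      by (rule prime_elem_multiplicity_mult_distrib) (use q(1) Y1nz Ipos in simp_all)
    then show ?thesis using YI vXD vI by simp
  qed
  have qY: "q dvd Y - 1" using XE1 Y_def cong_to_1_nat by blast
  have vYpos: "multiplicity q (Y - 1) > 0"
    using qY Y1nz qunit by (simp add: multiplicity_gt_zero_iff)
  define d where "d = y2 - e"
  have ey2: "e < y2" using vY vYpos by simp
  have vYd: "multiplicity q (Y - 1) = d" using vY d_def by simp
  have y2de: "y2 = d + e" using ey2 d_def by simp
  have Ipoly: "I_poly E N (int X) = int I"
    unfolding I_poly_def I_def Y_def by (simp add: power_mult)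
  have Icong: "[I_poly E N (int X) = 0] (mod (int q ^ e))"
  proof -
    have "q^e dvd I" unfolding vI[symmetric] by (rule multiplicity_dvd)
    then have "int q ^ e dvd int I" by (metis of_nat_dvd_iff of_nat_power)
    then show ?thesis unfolding Ipoly by (simp add: cong_0_iff)
  qed
  define An where "An = (if E = 1 then X - 1 else (\<Sum>j<E. X^j))"
  have XA: "(X - 1) * An = Y - 1" if "E > 1"
    using that geom_nat[of X E] X2 unfolding An_def Y_def by simp
  have AnY: "An = Y - 1" if "E = 1" using that unfolding An_def Y_def by simp
  have Anpos: "An > 0"
  proof (cases "E = 1")
    case True then show ?thesis using AnY Y2 by simp
  next
    case False then show ?thesis unfolding An_def using sum_pow_pos[OF E0, of X] X2 by simp
  qed
  have vA: "multiplicity q An = d"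
  proof (cases "E = 1")
    case True then show ?thesis using AnY vYd by simp
  next
    case False
    then have E1: "E > 1" using E0 by simp
    have "\<not> q dvd X - 1"
    proof
      assume "q dvd X - 1"
      then have "[X^1 = 1] (mod q)" using X2 by (simp add: cong_altdef_nat)
      then show False using minE[of 1] E1 by simp
    qed
    then have vX1: "multiplicity q (X - 1) = 0" by (rule not_dvd_imp_multiplicity_0)
    have "multiplicity q ((X - 1) * An) = multiplicity q (X - 1) + multiplicity q An"
      by (rule prime_elem_multiplicity_mult_distrib) (use q(1) Anpos X2 in simp_all)
    then show ?thesis using XA[OF E1] vYd vX1 by simp
  qed
  obtain Kn where AK: "An = q^d * Kn" and qK: "\<not> q dvd Kn"
    using multiplicity_decompose'[of An q] Anpos qunit vA by auto
  have Knpos: "Kn > 0" using AK Anpos by (cases Kn) auto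
  define K where "K = int Kn"
  have Kpos: "K > 0" using Knpos K_def by simp
  have Kcop: "coprime K (int q)"
    unfolding K_def coprime_int_iff using prime_imp_coprime[OF q(1) qK] by (simp add: coprime_commute)
  have Apoly: "A_poly E (int X) = int An"
    unfolding A_poly_def An_def using X2 by (simp add: of_nat_diff)
  have AKeq: "A_poly E (int X) = K * int q ^ (y2 - e)"
    unfolding Apoly AK K_def d_def by simp
  define Bn where "Bn = (if E = 1 then X^n else X^n * (X - 1))"
  have Bpoly: "B_poly n E (int X) = int Bn"
    unfolding B_poly_def Bn_def using X2 by (simp add: of_nat_diff)
  have BA: "Bn * An = X^n * (Y - 1)"
  proof (cases "E = 1")
    case True then show ?thesis using AnY unfolding Bn_def by simp
  next
    case False
    then have E1: "E > 1" using E0 by simp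
    show ?thesis using XA[OF E1] False unfolding Bn_def by (simp add: mult.assoc)
  qed
  have "q^d * (Bn * I * Kn) = Bn * An * I"
    using AK by (simp add: mult_ac)
  also have "\<dots> = X^n * (X^D - 1)" using BA YI by (simp add: mult.assoc)
  also have "\<dots> = q^d * (q^e * (q^s - 1))" using eq2 y2de by (simp add: power_add mult_ac)
  finally have BIK: "Bn * I * Kn = q^e * (q^s - 1)" using q2 by simp
  have BIKi: "B_poly n E (int X) * I_poly E N (int X) * K = int q ^ e * (int q ^ (y1 - y2) - 1)"
  proof -
    have "int (Bn * I * Kn) = int (q^e * (q^s - 1))" using BIK by simp
    then show ?thesis unfolding Bpoly Ipoly K_def s_def using qs1 s_def by (simp add: of_nat_diff)
  qed
  have F1: "X^n * (X^D - 1) < q^y1"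
  proof -
    have "q^y1 = q^y2 * (q^s - 1) + q^y2" using qy1 qs1 by (simp add: diff_mult_distrib2)
    then show ?thesis using eq2 q2 by simp
  qed
  have F2: "X^(m-1) * (X - 1) \<le> X^n * (X^D - 1)"
  proof -
    have "X^n * (X^D - 1) = X^m - X^n" using XmD by (simp add: diff_mult_distrib2)
    moreover have "X^n \<le> X^(m-1)" using mn X2 by (intro power_increasing) simp_all
    moreover have "X^m = X^(m-1) * X" using mn by (simp add: power_Suc2[symmetric])
    moreover have "X^(m-1) * (X - 1) = X^(m-1) * X - X^(m-1)" by (simp add: diff_mult_distrib2)
    ultimately show ?thesis by (simp add: diff_le_mono2)
  qed
  have dd: "y2 - e = d" unfolding d_def ..
  have rd: "real y2 - real e = real d" using ey2 d_def by (simp add: of_nat_diff)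
  have partI: "E = 1 \<longrightarrow> y1 > 2 * (y2 - e) \<and> (K > 1 \<longrightarrow> y1 > m * (y2 - e))"
  proof
    assume E1: "E = 1"
    have "X - 1 = q^d * Kn" using AK AnY[OF E1] Y_def E1 by simp
    then have qdX: "q^d \<le> X - 1" using Knpos by simp
    then have qdX': "q^d < X" using X2 by arith
    have m1: "m - 1 > 0" using m3 by simp
    have dm: "d*m = d*(m-1) + d" using m3 by (cases m) simp_all
    have "q^(d*m) = (q^d)^(m-1) * q^d"
      unfolding dm power_add power_mult ..
    also have "\<dots> < X^(m-1) * (X - 1)"
      by (rule mult_less_le_imp_less[OF power_strict_mono[OF qdX' _ m1] qdX]) (use q2 in simp_all)
    also have "\<dots> < q^y1" using F1 F2 by simp
    finally have lt: "q^(d*m) < q^y1" .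
    have "d*m < y1" by (rule power_less_imp_less_exp[OF _ lt]) (use q2 in simp)
    moreover have "2*d \<le> m*d" using m3 by (intro mult_le_mono1) simp
    moreover have "m*d = d*m" by (rule mult.commute)
    ultimately have "2*d < y1" "m*d < y1" by linarith+
    then show "y1 > 2 * (y2 - e) \<and> (K > 1 \<longrightarrow> y1 > m * (y2 - e))"
      unfolding dd by simp
  qed
  have partII: "E > 1 \<longrightarrow>
          (K > 1 \<longrightarrow> real y1 \<ge> real m / (real E - 1) * (real y2 - real e)) \<and>
          (((real y2 - real e) * (real m - 2 * real E + 2) + real E - 1) / (real m + real \<delta> * (real E - 1))
             \<ge> ln 2 / ln (real q) \<longrightarrow> y1 \<ge> 2 * (y2 - e))"
  proof
    assume E1: "E > 1"
    have ED: "E \<le> D" using DEN N0 by simp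
    have Em: "E < m" using ED D_def mn n0 by simp
    have hA: "(X-1)*An < X^E" using XA[OF E1] Y_def Y2 by simp
    have qdA: "q^d \<le> An" using AK Knpos by simp
    have partK: "K > 1 \<longrightarrow> real y1 \<ge> real m / (real E - 1) * (real y2 - real e)"
    proof
      assume "K > 1"
      then have K2: "Kn \<ge> 2" using K_def by simp
      define M where "M = m - E"
      have IY: "Y^(N-1) \<le> I" unfolding I_def by (rule member_le_sum) (use N0 in auto)
      have expo: "n + E*(N-1) = M"
      proof -
        have "E*(N-1) = E*N - E" by (simp add: diff_mult_distrib2)
        then show ?thesis unfolding M_def using DEN D_def ED mn by simp
      qed
      have XnY: "X^n * Y^(N-1) = X^M"
        unfolding Y_def expo[symmetric] by (simp add: power_add power_mult)
      have "X^M*(X-1)*Kn*q^d = X^n * Y^(N-1) * ((X-1)*An)" unfolding XnY AK by (simp add: mult_ac)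
      also have "\<dots> \<le> X^n * I * ((X-1)*An)" using IY by simp
      also have "\<dots> = X^n * (X^D - 1)" using XA[OF E1] YI by (simp add: mult_ac)
      also have "\<dots> < q^y1" by (rule F1)
      finally have hy: "X^M*(X-1)*Kn*q^d < q^y1" .
      have "(M+E)*d < (E-1)*y1"
        by (rule ineqK[OF X2 K2 _ q2 hA _ hy]) (use E1 AK in \<open>simp_all add: mult.commute\<close>)
      then have "m*d \<le> (E-1)*y1" unfolding M_def using Em by simp
      then have "real (m*d) \<le> real ((E-1)*y1)" by (simp only: of_nat_le_iff)
      then have h: "real m * real d \<le> (real E - 1) * real y1" using E1 by (simp add: of_nat_diff)
      have Epos: "real E - 1 > 0" using E1 by simp
      have "real m / (real E - 1) * real d = (real m * real d) / (real E - 1)" by simp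
      also have "\<dots> \<le> real y1" using h Epos by (simp add: pos_divide_le_eq mult.commute)
      finally show "real y1 \<ge> real m / (real E - 1) * (real y2 - real e)" unfolding rd .
    qed
    have partL: "((real y2 - real e) * (real m - 2 * real E + 2) + real E - 1) / (real m + real \<delta> * (real E - 1))
             \<ge> ln 2 / ln (real q) \<longrightarrow> y1 \<ge> 2 * (y2 - e)"
    proof
      assume H: "((real y2 - real e) * (real m - 2 * real E + 2) + real E - 1) / (real m + real \<delta> * (real E - 1))
             \<ge> ln 2 / ln (real q)"
      obtain F where F: "E = Suc F" using E1 by (cases E) auto
      have XE: "X^E = X * X^F" using F by simp
      have "(X-1)*An < X * X^F" using hA XE by simp
      also have "X * X^F \<le> (X-1) * (2 * X^F)" using X2 by simp
      finally have "An < 2 * X^F" using X2 by simp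
      then have G1: "q^d < 2 * X^F" using qdA by simp
      have G2: "X^m \<le> 2^\<delta> * q^y1"
      proof (cases "X^m > q^y1")
        case True
        then have "\<delta> = 1" unfolding \<delta>_def by simp
        moreover have "X^m \<le> 2 * q^y1"
        proof -
          have "X^m = X^(m-1) * X" using mn by (simp add: power_Suc2[symmetric])
          also have "\<dots> \<le> X^(m-1) * (2 * (X - 1))" using X2 by simp
          also have "\<dots> = 2 * (X^(m-1) * (X - 1))" by simp
          also have "\<dots> \<le> 2 * q^y1" using F1 F2 by simp
          finally show ?thesis .
        qed
        ultimately show ?thesis by simp
      next
        case False
        then have "\<delta> = 0" unfolding \<delta>_def by simp
        then show ?thesis using False by simp
      qed
      have m0: "m > 0" using m3 by simp
      have "q^(d*m) = (q^d)^m" by (rule power_mult)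
      also have "\<dots> < (2 * X^F)^m" by (rule power_strict_mono[OF G1 _ m0]) simp
      also have "\<dots> = 2^m * (X^m)^F" by (simp add: power_mult_distrib power_mult[symmetric] mult.commute)
      also have "\<dots> \<le> 2^m * (2^\<delta> * q^y1)^F" using G2 by (simp add: power_mono)
      also have "\<dots> = 2^(m + \<delta>*F) * q^(y1*F)" by (simp add: power_mult_distrib power_mult power_add)
      finally have G3: "q^(d*m) < 2^(m + \<delta>*F) * q^(y1*F)" .
      then have "real (q^(d*m)) < real (2^(m + \<delta>*F) * q^(y1*F))" by (simp only: of_nat_less_iff)
      then have G3r: "real q ^ (d*m) < 2^(m + \<delta>*F) * real q ^ (y1*F)" by simp
      have qpos: "real q > 0" using q2 by simp
      have "ln (real q ^ (d*m)) < ln (2^(m + \<delta>*F) * real q ^ (y1*F))"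
        using G3r qpos by (subst ln_less_cancel_iff) simp_all
      then have Lin: "real (d*m) * ln (real q) < real (m + \<delta>*F) * ln 2 + real (y1*F) * ln (real q)"
        using qpos by (simp add: ln_mult ln_realpow)
      define Lq where "Lq = ln (real q)"
      define L2 where "L2 = ln (2::real)"
      define Dn where "Dn = real m + real \<delta> * (real E - 1)"
      define Nm where "Nm = real d * (real m - 2 * real E + 2) + real E - 1"
      have Lqpos: "Lq > 0" unfolding Lq_def using q2 by simp
      have "real \<delta> * (real E - 1) \<ge> 0" using E1 by (intro mult_nonneg_nonneg) simp_all
      then have Dnpos: "Dn > 0" unfolding Dn_def using m3 by linarith
      have REF: "real F = real E - 1" using F by simp
      have Lin': "real d * real m * Lq < Dn * L2 + real y1 * (real E - 1) * Lq"
        using Lin unfolding Lq_def L2_def Dn_def REF[symmetric] by (simp add: algebra_simps)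
      have "L2 / Lq \<le> Nm / Dn" using H unfolding Nm_def Dn_def L2_def Lq_def rd .
      then have "L2 / Lq * Dn \<le> Nm" using Dnpos by (simp add: le_divide_eq)
      then have "L2 * Dn \<le> Nm * Lq" using Lqpos by (simp add: divide_le_eq mult.commute mult.left_commute)
      then have H': "Dn * L2 \<le> Nm * Lq" by (simp add: mult.commute)
      show "y1 \<ge> 2 * (y2 - e)"
      proof (rule ccontr)
        assume "\<not> y1 \<ge> 2 * (y2 - e)"
        then have "y1 + 1 \<le> 2 * d" unfolding dd by simp
        then have y1r: "real y1 \<le> 2 * real d - 1" by linarith
        have "real y1 * ((real E - 1) * Lq) \<le> (2 * real d - 1) * ((real E - 1) * Lq)"
          by (rule mult_right_mono[OF y1r]) (use E1 Lqpos in simp)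
        then have "real y1 * (real E - 1) * Lq \<le> (2 * real d - 1) * (real E - 1) * Lq"
          by (simp add: mult.assoc)
        moreover have "Nm * Lq + (2 * real d - 1) * (real E - 1) * Lq = real d * real m * Lq"
          unfolding Nm_def by (simp add: algebra_simps)
        ultimately show False using Lin' H' by linarith
      qed
    qed
    show "(K > 1 \<longrightarrow> real y1 \<ge> real m / (real E - 1) * (real y2 - real e)) \<and>
          (((real y2 - real e) * (real m - 2 * real E + 2) + real E - 1) / (real m + real \<delta> * (real E - 1))
             \<ge> ln 2 / ln (real q) \<longrightarrow> y1 \<ge> 2 * (y2 - e))" using partK partL by blast
  qed
  show ?thesis using partI partII Icong AKeq BIKi Kpos Kcop ey2 by blast
qed

end
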